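(* Let $T$ be an $n$-taxon tree and $\widetilde\phi_T:\mathbb C^N\to\mathbb C^{\kappa^n}$ a polynomial parameterization map of a phylogenetic model $\mathcal M$ on $T$, with homogeneous phylogenetic ideal $\widetilde J_T$. Let $\phi_T:\mathbb C^N\times\mathbb C^\kappa\to\mathbb C^{\kappa^n}$ be the parameterization of the $\mathcal M$+I model, $$\phi_T(\mathbf s,(\delta,\pi_I))=(1-\delta)\widetilde\phi_T(\mathbf s)+\delta\,\mathrm{diag}(\pi_I),$$ with homogeneous phylogenetic ideal $J_T$. Let $P_{eq}=\{p_{ii\dots i}: i\in\{1,\dots,\kappa\}\}$ and let $P'$ be the set of all other indeterminates $p_{i_1\dots i_n}$. Then $$J_T=\left(\widetilde J_T\cap\mathbb C[P']\right)\mathbb C[P],$$ i.e. $J_T$ is generated by the elements of $\widetilde J_T$ not involving the variables in $P_{eq}$.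
   Context: $\mathbb C[P]$ is the polynomial ring in the $\kappa^n$ indeterminates $p_{i_1\dots i_n}$, $i_k\in\{1,\dots,\kappa\}$, and $\mathbb C[P']$ is its subring in the indeterminates of $P'$. Here $(\delta,\pi_I)\in\mathbb C\times\mathbb C^{\kappa-1}$ are the remaining coordinates of $\mathbb C^\kappa$ (the class size $\delta$ and the invariable-site state distribution $\pi_I$, a vector in $\mathbb C^\kappa$ whose entries sum to 1), and $\mathrm{diag}(\pi_I)$ is the $\kappa\times\dots\times\kappa$ array with entry $\pi_I(i)$ at position $(i,\dots,i)$ and zeros elsewhere. For a polynomial parameterization $\psi$ with values in $\mathbb C^{\kappa^n}$, its (affine) phylogenetic ideal is the ideal of all polynomials in $\mathbb C[P]$ vanishing on the image of $\psi$, and its homogeneous phylogenetic ideal is the ideal generated by the homogeneous polynomials in that ideal; equivalently, the ideal of polynomials vanishing on the cone $\{t\,\psi(\mathbf x): t\in\mathbb C\}$ over the image. *)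

theory Defs
  imports Complex_Main "HOL-Library.Poly_Mapping"
begin

text \<open>Multivariate polynomials with complex coefficients in indeterminates of type 'v:
  finitely supported maps from monomials (finitely supported exponent vectors) to coefficients.\<close>
type_synonym 'v mpoly = "('v \<Rightarrow>\<^sub>0 nat) \<Rightarrow>\<^sub>0 complex"

definition mpoly_eval :: "('v \<Rightarrow> complex) \<Rightarrow> 'v mpoly \<Rightarrow> complex" where
  "mpoly_eval x f =
     (\<Sum>m\<in>Poly_Mapping.keys f. Poly_Mapping.lookup f m *
        (\<Prod>v\<in>Poly_Mapping.keys m. x v ^ Poly_Mapping.lookup m v))"

definition mpoly_vars :: "'v mpoly \<Rightarrow> 'v set" where
  "mpoly_vars f = (\<Union>m\<in>Poly_Mapping.keys f. Poly_Mapping.keys m)"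

definition monomial_degree :: "('v \<Rightarrow>\<^sub>0 nat) \<Rightarrow> nat" where
  "monomial_degree m = (\<Sum>v\<in>Poly_Mapping.keys m. Poly_Mapping.lookup m v)"

definition homogeneous :: "'v mpoly \<Rightarrow> bool" where
  "homogeneous f \<longleftrightarrow> (\<exists>d. \<forall>m\<in>Poly_Mapping.keys f. monomial_degree m = d)"

definition ideal_gen :: "'v mpoly set \<Rightarrow> 'v mpoly set" where
  "ideal_gen S = {f. \<exists>F c. finite F \<and> F \<subseteq> S \<and> f = (\<Sum>g\<in>F. c g * g)}"

definition vanishing_ideal :: "('v \<Rightarrow> complex) set \<Rightarrow> 'v mpoly set" where
  "vanishing_ideal V = {f. \<forall>x\<in>V. mpoly_eval x f = 0}"

definition hom_phylo_ideal :: "('v \<Rightarrow> complex) set \<Rightarrow> 'v mpoly set" where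
  "hom_phylo_ideal V = ideal_gen {f. homogeneous f \<and> f \<in> vanishing_ideal V}"

text \<open>Positions (i_1,...,i_n) of a kappa^n array are maps taxa => states.
  A position is diagonal if all entries coincide, i.e. it is (i,...,i).\<close>
definition diag_pos :: "('n \<Rightarrow> 'k) \<Rightarrow> bool" where
  "diag_pos i \<longleftrightarrow> (\<exists>a. i = (\<lambda>_. a))"

definition diag_array :: "('k \<Rightarrow> complex) \<Rightarrow> ('n \<Rightarrow> 'k) \<Rightarrow> complex" where
  "diag_array \<pi> i = (if diag_pos i then \<pi> (THE a. i = (\<lambda>_. a)) else 0)"

definition P_nondiag :: "('n \<Rightarrow> 'k) set" where
  "P_nondiag = {i. \<not> diag_pos i}"

end

theory Submission imports Defs "HOL-Analysis.Analysis" begin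

definition mon :: "('v \<Rightarrow> complex) \<Rightarrow> ('v \<Rightarrow>\<^sub>0 nat) \<Rightarrow> complex" where
  "mon x m = (\<Prod>v\<in>Poly_Mapping.keys m. x v ^ Poly_Mapping.lookup m v)"

lemma eval_superset:
  assumes "finite K" "Poly_Mapping.keys f \<subseteq> K"
  shows "mpoly_eval x f = (\<Sum>m\<in>K. Poly_Mapping.lookup f m * mon x m)"
  unfolding mpoly_eval_def mon_def
  by (rule sum.mono_neutral_left[OF assms(1,2)]) (auto simp: in_keys_iff)

lemma eval_add: "mpoly_eval x (f + g) = mpoly_eval x f + mpoly_eval x g"
proof -
  let ?K = "Poly_Mapping.keys f \<union> Poly_Mapping.keys g"
  have "mpoly_eval x (f + g) = (\<Sum>m\<in>?K. Poly_Mapping.lookup (f+g) m * mon x m)"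
    using keys_add[of f g] by (intro eval_superset) auto
  also have "\<dots> = (\<Sum>m\<in>?K. Poly_Mapping.lookup f m * mon x m) + (\<Sum>m\<in>?K. Poly_Mapping.lookup g m * mon x m)"
    by (simp add: lookup_add distrib_right sum.distrib)
  also have "\<dots> = mpoly_eval x f + mpoly_eval x g"
    by (subst (1 2) eval_superset[where K="?K"]) auto
  finally show ?thesis .
qed

lemma eval_zero [simp]: "mpoly_eval x 0 = 0"
  by (simp add: mpoly_eval_def)

lemma eval_sum: "mpoly_eval x (sum F A) = (\<Sum>a\<in>A. mpoly_eval x (F a))"
  by (induction A rule: infinite_finite_induct) (auto simp: eval_add)

lemma eval_single [simp]: "mpoly_eval x (Poly_Mapping.single m c) = c * mon x m"
  by (simp add: mpoly_eval_def mon_def)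

lemma mon_superset:
  assumes "finite V" "Poly_Mapping.keys m \<subseteq> V"
  shows "mon x m = (\<Prod>v\<in>V. x v ^ Poly_Mapping.lookup m v)"
  unfolding mon_def
  by (rule prod.mono_neutral_left[OF assms(1,2)]) (auto simp: in_keys_iff)

lemma mon_add: "mon x (m1 + m2) = mon x m1 * mon x m2"
proof -
  let ?V = "Poly_Mapping.keys m1 \<union> Poly_Mapping.keys m2"
  have "mon x (m1 + m2) = (\<Prod>v\<in>?V. x v ^ Poly_Mapping.lookup (m1 + m2) v)"
    using keys_add[of m1 m2] by (intro mon_superset) auto
  also have "\<dots> = (\<Prod>v\<in>?V. x v ^ Poly_Mapping.lookup m1 v) * (\<Prod>v\<in>?V. x v ^ Poly_Mapping.lookup m2 v)"
    by (simp add: lookup_add power_add prod.distrib)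
  also have "\<dots> = mon x m1 * mon x m2"
    by (subst (1 2) mon_superset[where V="?V"]) auto
  finally show ?thesis .
qed

lemma poly_expand: "f = (\<Sum>m\<in>Poly_Mapping.keys f. Poly_Mapping.single m (Poly_Mapping.lookup f m))"
proof (rule poly_mapping_eqI)
  fix k
  show "Poly_Mapping.lookup f k = Poly_Mapping.lookup (\<Sum>m\<in>Poly_Mapping.keys f. Poly_Mapping.single m (Poly_Mapping.lookup f m)) k"
    by (cases "k \<in> Poly_Mapping.keys f") (auto simp: lookup_sum lookup_single when_def in_keys_iff)
qed

lemma eval_mult: "mpoly_eval x (f * g) = mpoly_eval x f * mpoly_eval x g"
proof -
  have "f * g = (\<Sum>a\<in>Poly_Mapping.keys f. \<Sum>b\<in>Poly_Mapping.keys g.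
      Poly_Mapping.single (a + b) (Poly_Mapping.lookup f a * Poly_Mapping.lookup g b))"
    apply (subst (1) poly_expand[of f], subst (1) poly_expand[of g])
    by (simp add: sum_product mult_single)
  then have "mpoly_eval x (f * g) = (\<Sum>a\<in>Poly_Mapping.keys f. \<Sum>b\<in>Poly_Mapping.keys g.
      (Poly_Mapping.lookup f a * mon x a) * (Poly_Mapping.lookup g b * mon x b))"
    by (simp add: eval_sum mon_add mult_ac)
  also have "\<dots> = mpoly_eval x f * mpoly_eval x g"
    by (simp add: mpoly_eval_def mon_def sum_product)
  finally show ?thesis .
qed

lemma finite_vars: "finite (mpoly_vars f)"
  by (simp add: mpoly_vars_def)

lemma eval_cong:
  assumes "\<And>v. v \<in> mpoly_vars f \<Longrightarrow> x v = x' v"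
  shows "mpoly_eval x f = mpoly_eval x' f"
  unfolding mpoly_eval_def
  by (intro sum.cong refl arg_cong2[where f="(*)"] prod.cong arg_cong2[where f="power"] assms)
    (auto simp: mpoly_vars_def)

lemma mon_scale: "mon (\<lambda>v. t * x v) m = t ^ monomial_degree m * mon x m"
  by (simp add: mon_def monomial_degree_def power_mult_distrib prod.distrib power_sum)

lemma eval_scale_hom:
  assumes "\<forall>m\<in>Poly_Mapping.keys f. monomial_degree m = d"
  shows "mpoly_eval (\<lambda>v. t * x v) f = t ^ d * mpoly_eval x f"
  unfolding eval_superset[OF finite_keys order_refl] mon_scale sum_distrib_left
  by (intro sum.cong) (auto simp: assms)

lemma ig_zero: "0 \<in> ideal_gen S"
  unfolding ideal_gen_def by (rule CollectI, rule exI[of _ "{}"]) auto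

lemma ig_base: "g \<in> S \<Longrightarrow> g \<in> ideal_gen S"
  unfolding ideal_gen_def by (rule CollectI, rule exI[of _ "{g}"], rule exI[of _ "\<lambda>_. 1"]) auto

lemma ig_add:
  assumes "f1 \<in> ideal_gen S" "f2 \<in> ideal_gen S"
  shows "f1 + f2 \<in> ideal_gen S"
proof -
  obtain F1 c1 where 1: "finite F1" "F1 \<subseteq> S" "f1 = (\<Sum>g\<in>F1. c1 g * g)"
    using assms(1) unfolding ideal_gen_def by blast
  obtain F2 c2 where 2: "finite F2" "F2 \<subseteq> S" "f2 = (\<Sum>g\<in>F2. c2 g * g)"
    using assms(2) unfolding ideal_gen_def by blast
  let ?c = "\<lambda>g. (if g \<in> F1 then c1 g else 0) + (if g \<in> F2 then c2 g else 0)"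
  have e1: "(\<Sum>g\<in>F1 \<union> F2. (if g \<in> F1 then c1 g else 0) * g) = f1"
    unfolding 1(3) using 1(1) 2(1) by (intro sum.mono_neutral_cong_right) auto
  have e2: "(\<Sum>g\<in>F1 \<union> F2. (if g \<in> F2 then c2 g else 0) * g) = f2"
    unfolding 2(3) using 1(1) 2(1) by (intro sum.mono_neutral_cong_right) auto
  have "f1 + f2 = (\<Sum>g\<in>F1 \<union> F2. ?c g * g)"
    unfolding distrib_right sum.distrib e1 e2 ..
  then show ?thesis unfolding ideal_gen_def
    by (intro CollectI exI[of _ "F1 \<union> F2"] exI[of _ ?c]) (use 1 2 in auto)
qed

lemma ig_mult:
  assumes "f \<in> ideal_gen S"
  shows "a * f \<in> ideal_gen S"
proof -
  obtain F c where 1: "finite F" "F \<subseteq> S" "f = (\<Sum>g\<in>F. c g * g)"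
    using assms(1) unfolding ideal_gen_def by blast
  have "a * f = (\<Sum>g\<in>F. (a * c g) * g)"
    unfolding 1(3) sum_distrib_left by (simp add: mult.assoc)
  then show ?thesis unfolding ideal_gen_def
    by (intro CollectI exI[of _ F] exI[of _ "\<lambda>g. a * c g"]) (use 1 in auto)
qed

lemma ig_sum: "(\<And>a. a \<in> A \<Longrightarrow> F a \<in> ideal_gen S) \<Longrightarrow> sum F A \<in> ideal_gen S"
  by (induction A rule: infinite_finite_induct) (auto simp: ig_zero ig_add)

lemma ig_mono:
  assumes "S \<subseteq> ideal_gen T"
  shows "ideal_gen S \<subseteq> ideal_gen T"
proof
  fix f assume "f \<in> ideal_gen S"
  then obtain F c where 1: "finite F" "F \<subseteq> S" "f = (\<Sum>g\<in>F. c g * g)"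
    unfolding ideal_gen_def by blast
  show "f \<in> ideal_gen T" unfolding 1(3)
    using 1(2) assms by (intro ig_sum ig_mult) auto
qed

lemma ig_vanish:
  assumes "S \<subseteq> vanishing_ideal V"
  shows "ideal_gen S \<subseteq> vanishing_ideal V"
proof
  fix f assume "f \<in> ideal_gen S"
  then obtain F c where 1: "finite F" "F \<subseteq> S" "f = (\<Sum>g\<in>F. c g * g)"
    unfolding ideal_gen_def by blast
  show "f \<in> vanishing_ideal V"
    using 1(2) assms unfolding 1(3) vanishing_ideal_def
    by (auto simp: eval_sum eval_mult intro!: sum.neutral)
qed

lemma finite_polyfun_zero:
  fixes e :: "nat \<Rightarrow> complex"
  assumes "finite D" "\<And>t. (\<Sum>d\<in>D. e d * t ^ d) = 0" "d \<in> D"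
  shows "e d = 0"
proof -
  let ?N = "Max D"
  have sub: "D \<subseteq> {..?N}" using assms(1) by auto
  have "\<forall>t. (\<Sum>i\<le>?N. (if i \<in> D then e i else 0) * t ^ i) = 0"
  proof
    fix t :: complex
    have "(\<Sum>i\<le>?N. (if i \<in> D then e i else 0) * t ^ i) = (\<Sum>i\<le>?N. if i \<in> D then e i * t ^ i else 0)"
      by (intro sum.cong) auto
    also have "\<dots> = (\<Sum>i\<in>{..?N} \<inter> D. e i * t ^ i)"
      by (simp add: sum.inter_restrict)
    also have "{..?N} \<inter> D = D" using sub by blast
    finally show "(\<Sum>i\<le>?N. (if i \<in> D then e i else 0) * t ^ i) = 0" using assms(2) by simp
  qed
  then have "\<forall>i\<le>?N. (if i \<in> D then e i else 0) = 0" by (rule polyfun_eq_0[THEN iffD1])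
  then show ?thesis using assms(3) sub by auto
qed

definition cone :: "('v \<Rightarrow> complex) set \<Rightarrow> ('v \<Rightarrow> complex) set" where
  "cone V = {(\<lambda>i. t * x i) | t x. x \<in> V}"

definition hcomp :: "nat \<Rightarrow> 'v mpoly \<Rightarrow> 'v mpoly" where
  "hcomp d f = (\<Sum>m\<in>{m\<in>Poly_Mapping.keys f. monomial_degree m = d}. Poly_Mapping.single m (Poly_Mapping.lookup f m))"

lemma hcomp_keys: "Poly_Mapping.keys (hcomp d f) \<subseteq> {m\<in>Poly_Mapping.keys f. monomial_degree m = d}"
  unfolding hcomp_def by (rule order_trans[OF keys_sum]) auto

lemma hcomp_sum: "f = (\<Sum>d\<in>monomial_degree ` Poly_Mapping.keys f. hcomp d f)"
  unfolding hcomp_def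
  by (subst sum.group) (auto simp: poly_expand[symmetric])

lemma eval_hcomp_scale: "mpoly_eval (\<lambda>v. t * x v) (hcomp d f) = t ^ d * mpoly_eval x (hcomp d f)"
  using hcomp_keys by (intro eval_scale_hom) blast

lemma hom_ideal_eq: "hom_phylo_ideal V = vanishing_ideal (cone V)"
proof
  show "hom_phylo_ideal V \<subseteq> vanishing_ideal (cone V)"
    unfolding hom_phylo_ideal_def
  proof (rule ig_vanish, safe)
    fix h assume h: "homogeneous h" "h \<in> vanishing_ideal V"
    obtain d where d: "\<forall>m\<in>Poly_Mapping.keys h. monomial_degree m = d"
      using h(1) unfolding homogeneous_def by blast
    show "h \<in> vanishing_ideal (cone V)"
      using h(2) unfolding vanishing_ideal_def cone_def
      by (auto simp: eval_scale_hom[OF d])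
  qed
next
  show "vanishing_ideal (cone V) \<subseteq> hom_phylo_ideal V"
  proof
    fix f assume f: "f \<in> vanishing_ideal (cone V)"
    let ?D = "monomial_degree ` Poly_Mapping.keys f"
    have "hcomp d f \<in> {f. homogeneous f \<and> f \<in> vanishing_ideal V}" if "d \<in> ?D" for d
    proof safe
      show "homogeneous (hcomp d f)" unfolding homogeneous_def using hcomp_keys by blast
      show "hcomp d f \<in> vanishing_ideal V" unfolding vanishing_ideal_def
      proof safe
        fix x assume x: "x \<in> V"
        have "\<And>t. (\<Sum>d\<in>?D. mpoly_eval x (hcomp d f) * t ^ d) = 0"
        proof -
          fix t
          have "(\<lambda>i. t * x i) \<in> cone V" using x unfolding cone_def by blast
          then have "0 = mpoly_eval (\<lambda>i. t * x i) f" using f unfolding vanishing_ideal_def by auto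
          also have "\<dots> = (\<Sum>d\<in>?D. mpoly_eval (\<lambda>i. t * x i) (hcomp d f))"
            by (subst hcomp_sum) (simp add: eval_sum)
          finally show "(\<Sum>d\<in>?D. mpoly_eval x (hcomp d f) * t ^ d) = 0"
            by (simp add: eval_hcomp_scale mult.commute)
        qed
        then show "mpoly_eval x (hcomp d f) = 0"
          by (rule finite_polyfun_zero[OF finite_imageI[OF finite_keys] _ that])
      qed
    qed
    then show "f \<in> hom_phylo_ideal V"
      unfolding hom_phylo_ideal_def by (subst hcomp_sum) (intro ig_sum ig_base)
  qed
qed

lemma split_mon: "Poly_Mapping.lookup m y = j \<Longrightarrow> Poly_Mapping.single y j + (m - Poly_Mapping.single y j) = (m :: 'v \<Rightarrow>\<^sub>0 nat)"
  by (rule poly_mapping_eqI) (auto simp: lookup_add lookup_minus lookup_single when_def)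

lemma keys_minus_single: "Poly_Mapping.lookup m y = j \<Longrightarrow> Poly_Mapping.keys (m - Poly_Mapping.single y j) \<subseteq> Poly_Mapping.keys m - {y}"
  for m :: "'v \<Rightarrow>\<^sub>0 nat"
  by (auto simp: in_keys_iff lookup_minus lookup_single when_def)

lemma mon_single_var: "mon x (Poly_Mapping.single y j) = x y ^ j"
  by (cases "j = 0") (auto simp: mon_def)

lemma vanishing_anti: "A \<subseteq> B \<Longrightarrow> vanishing_ideal B \<subseteq> vanishing_ideal A"
  unfolding vanishing_ideal_def by auto

lemma decomp_ideal:
  fixes Q :: "('v \<Rightarrow> complex) set" and N :: "'v set"
  assumes Qc: "\<And>x y c. x \<in> Q \<Longrightarrow> y \<notin> N \<Longrightarrow> x(y := c) \<in> Q"
  shows "f \<in> vanishing_ideal Q \<Longrightarrow> f \<in> ideal_gen (vanishing_ideal Q \<inter> {f. mpoly_vars f \<subseteq> N})"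
proof (induction "card (mpoly_vars f)" arbitrary: f rule: less_induct)
  case less
  show ?case
  proof (cases "mpoly_vars f \<subseteq> N")
    case True then show ?thesis using less.prems by (intro ig_base) auto
  next
    case False
    then obtain y where y: "y \<in> mpoly_vars f" "y \<notin> N" by blast
    define J where "J = (\<lambda>m. Poly_Mapping.lookup m y) ` Poly_Mapping.keys f"
    define fj where "fj j = (\<Sum>m\<in>{m\<in>Poly_Mapping.keys f. Poly_Mapping.lookup m y = j}.
        Poly_Mapping.single (m - Poly_Mapping.single y j) (Poly_Mapping.lookup f m))" for j
    have decomp: "f = (\<Sum>j\<in>J. Poly_Mapping.single (Poly_Mapping.single y j) 1 * fj j)"
    proof -
      have "f = (\<Sum>j\<in>J. \<Sum>m\<in>{m\<in>Poly_Mapping.keys f. Poly_Mapping.lookup m y = j}.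
                Poly_Mapping.single m (Poly_Mapping.lookup f m))"
        unfolding J_def by (subst sum.group) (auto simp: poly_expand[symmetric])
      also have "\<dots> = (\<Sum>j\<in>J. Poly_Mapping.single (Poly_Mapping.single y j) 1 * fj j)"
        unfolding fj_def sum_distrib_left mult_single
        by (intro sum.cong refl arg_cong2[where f=Poly_Mapping.single]) (auto simp: split_mon)
      finally show ?thesis .
    qed
    have vars_fj: "mpoly_vars (fj j) \<subseteq> mpoly_vars f - {y}" for j
    proof
      fix v assume "v \<in> mpoly_vars (fj j)"
      then obtain mm where mm: "mm \<in> Poly_Mapping.keys (fj j)" "v \<in> Poly_Mapping.keys mm"
        unfolding mpoly_vars_def by blast
      have "mm \<in> (\<Union>m\<in>{m\<in>Poly_Mapping.keys f. Poly_Mapping.lookup m y = j}.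
          Poly_Mapping.keys (Poly_Mapping.single (m - Poly_Mapping.single y j) (Poly_Mapping.lookup f m)))"
        using mm(1) keys_sum[of "\<lambda>m. Poly_Mapping.single (m - Poly_Mapping.single y j) (Poly_Mapping.lookup f m)"
          "{m\<in>Poly_Mapping.keys f. Poly_Mapping.lookup m y = j}"] unfolding fj_def by (meson subsetD)
      then obtain m where m: "m \<in> Poly_Mapping.keys f" "Poly_Mapping.lookup m y = j"
        "mm \<in> Poly_Mapping.keys (Poly_Mapping.single (m - Poly_Mapping.single y j) (Poly_Mapping.lookup f m))"
        by blast
      then have "mm = m - Poly_Mapping.single y j" by (auto split: if_splits)
      then have "v \<in> Poly_Mapping.keys m - {y}" using keys_minus_single[OF m(2)] mm(2) by blast
      then show "v \<in> mpoly_vars f - {y}" using m(1) unfolding mpoly_vars_def by blast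
    qed
    have card_fj: "card (mpoly_vars (fj j)) < card (mpoly_vars f)" for j
      using vars_fj[of j] y(1) by (intro psubset_card_mono finite_vars) blast
    have finJ: "finite J" unfolding J_def by simp
    have van_fj: "fj j \<in> vanishing_ideal Q" if "j \<in> J" for j
      unfolding vanishing_ideal_def
    proof safe
      fix x assume x: "x \<in> Q"
      have "(\<Sum>j\<in>J. mpoly_eval x (fj j) * c ^ j) = 0" for c
      proof -
        have "x(y := c) \<in> Q" using Qc[OF x y(2)] .
        then have "0 = mpoly_eval (x(y := c)) f" using less.prems unfolding vanishing_ideal_def by auto
        also have "\<dots> = (\<Sum>j\<in>J. c ^ j * mpoly_eval (x(y := c)) (fj j))"
          by (subst decomp) (simp add: eval_sum eval_mult mon_single_var)
        also have "\<dots> = (\<Sum>j\<in>J. mpoly_eval x (fj j) * c ^ j)"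
        proof (intro sum.cong refl)
          fix j
          have "mpoly_eval (x(y := c)) (fj j) = mpoly_eval x (fj j)"
            using vars_fj[of j] by (intro eval_cong) auto
          then show "c ^ j * mpoly_eval (x(y := c)) (fj j) = mpoly_eval x (fj j) * c ^ j" by simp
        qed
        finally show ?thesis by simp
      qed
      then show "mpoly_eval x (fj j) = 0"
        by (rule finite_polyfun_zero[OF finJ _ that])
    qed
    have "(\<Sum>j\<in>J. Poly_Mapping.single (Poly_Mapping.single y j) 1 * fj j)
       \<in> ideal_gen (vanishing_ideal Q \<inter> {f. mpoly_vars f \<subseteq> N})"
      using less.hyps[OF card_fj van_fj] by (intro ig_sum ig_mult) auto
    then show ?thesis using decomp by simp
  qed
qed

lemma cont_zero:
  fixes g :: "complex \<Rightarrow> complex"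
  assumes "continuous_on UNIV g" "finite A" "\<And>e. e \<notin> A \<Longrightarrow> g e = 0"
  shows "g 0 = 0"
proof -
  obtain r where r: "r > 0" "\<forall>a\<in>A. a \<noteq> 0 \<longrightarrow> r \<le> dist 0 a"
    using finite_set_avoid[OF assms(2), of 0] by blast
  have 1: "(g \<longlongrightarrow> g 0) (at 0)"
    using assms(1) by (simp add: continuous_on_def)
  have "eventually (\<lambda>e. g e = 0) (at 0)"
    unfolding eventually_at using r assms(3)
    by (intro exI[of _ r]) (auto simp: dist_commute)
  then have 2: "(g \<longlongrightarrow> 0) (at 0)" by (rule tendsto_eventually)
  show ?thesis using tendsto_unique[OF at_neq_bot 1 2] .
qed

lemma eval_line_cont: "continuous_on UNIV (\<lambda>e::complex. mpoly_eval (\<lambda>v. x v + e * w v) f)"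
  unfolding mpoly_eval_def by (intro continuous_intros)

lemma const_fun_eq: "((\<lambda>_::'n. a) = (\<lambda>_. b)) = (a = b)"
  by (simp add: fun_eq_iff)

theorem proposition9:
  fixes psi :: "('n::finite \<Rightarrow> 'k::finite) \<Rightarrow> ('p::finite) mpoly"
    and phit :: "('p \<Rightarrow> complex) \<Rightarrow> ('n \<Rightarrow> 'k) \<Rightarrow> complex"
    and phi :: "('p \<Rightarrow> complex) \<times> complex \<times> ('k \<Rightarrow> complex) \<Rightarrow> ('n \<Rightarrow> 'k) \<Rightarrow> complex"
  defines "phit \<equiv> (\<lambda>s i. mpoly_eval s (psi i))"
  defines "phi \<equiv> (\<lambda>(s, \<delta>, \<pi>) i. (1 - \<delta>) * phit s i + \<delta> * diag_array \<pi> i)"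
  shows "hom_phylo_ideal (phi ` {(s, \<delta>, \<pi>). (\<Sum>k\<in>UNIV. \<pi> k) = 1}) =
         ideal_gen (hom_phylo_ideal (phit ` UNIV) \<inter> {f. mpoly_vars f \<subseteq> P_nondiag})"
proof -
  let ?S = "{(s, \<delta>, \<pi>). (\<Sum>k\<in>UNIV. \<pi> k) = (1::complex)} :: (('p \<Rightarrow> complex) \<times> complex \<times> ('k \<Rightarrow> complex)) set"
  let ?G = "vanishing_ideal (cone (range phit)) \<inter> {f. mpoly_vars f \<subseteq> P_nondiag}"
  let ?Q = "{x. \<exists>t s. \<forall>i\<in>P_nondiag. x i = t * phit s i}"
  have nd_diag: "diag_array \<pi> i = 0" if "i \<in> P_nondiag" for \<pi> :: "'k \<Rightarrow> complex" and i :: "'n \<Rightarrow> 'k"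
    using that by (simp add: P_nondiag_def diag_array_def)
  have "vanishing_ideal (cone (phi ` ?S)) = ideal_gen ?G"
  proof
    show "ideal_gen ?G \<subseteq> vanishing_ideal (cone (phi ` ?S))"
    proof (rule ig_vanish, safe)
      fix g assume g: "g \<in> vanishing_ideal (cone (range phit))" "mpoly_vars g \<subseteq> P_nondiag"
      show "g \<in> vanishing_ideal (cone (phi ` ?S))"
        unfolding vanishing_ideal_def
      proof safe
        fix y assume "y \<in> cone (phi ` ?S)"
        then obtain T s \<delta> \<pi> where y: "y = (\<lambda>i. T * phi (s, \<delta>, \<pi>) i)"
          unfolding cone_def by auto
        have "mpoly_eval y g = mpoly_eval (\<lambda>i. (T * (1 - \<delta>)) * phit s i) g"
          using g(2) by (intro eval_cong) (auto simp: y phi_def nd_diag)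
        also have "\<dots> = 0" using g(1) unfolding vanishing_ideal_def cone_def by blast
        finally show "mpoly_eval y g = 0" .
      qed
    qed
  next
    show "vanishing_ideal (cone (phi ` ?S)) \<subseteq> ideal_gen ?G"
    proof
      fix f assume f: "f \<in> vanishing_ideal (cone (phi ` ?S))"
      have fQ: "f \<in> vanishing_ideal ?Q"
        unfolding vanishing_ideal_def
      proof safe
        fix x t s assume xq: "\<forall>i\<in>P_nondiag. x i = t * phit s i"
        define k0 :: 'k where "k0 = undefined"
        define d0 :: "'n \<Rightarrow> 'k" where "d0 = (\<lambda>_. k0)"
        define w where "w = (\<Sum>k\<in>UNIV. x (\<lambda>_. k) - t * phit s (\<lambda>_. k))"
        define xe where "xe e = (\<lambda>v. x v + e * (if v = d0 then 1 else 0))" for e :: complex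
        have d0_diag: "d0 \<notin> P_nondiag" unfolding P_nondiag_def diag_pos_def d0_def by blast
        have good: "mpoly_eval (xe e) f = 0" if e: "e \<notin> {-w, -t-w}" for e
        proof -
          define W where "W = w + e"
          define T where "T = t + W"
          have W0: "W \<noteq> 0"
          proof
            assume "W = 0"
            then have "e = - w" unfolding W_def by (simp add: add_eq_0_iff)
            then show False using e by simp
          qed
          have T0: "T \<noteq> 0"
          proof
            assume "T = 0"
            then have "(t + w) + e = 0" unfolding T_def W_def by (simp add: add.assoc)
            then have "e = - (t + w)" by (simp add: add_eq_0_iff)
            then show False using e by simp
          qed
          define vv where "vv k = xe e (\<lambda>_. k) - t * phit s (\<lambda>_. k)" for k
          define \<delta> where "\<delta> = W / T"
          define \<pi> where "\<pi> k = vv k / W" for k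
          have sumvv: "(\<Sum>k\<in>UNIV. vv k) = W"
          proof -
            have "vv k = (x (\<lambda>_. k) - t * phit s (\<lambda>_. k)) + (if k = k0 then e else 0)" for k
              unfolding vv_def xe_def d0_def const_fun_eq by simp
            then have "(\<Sum>k\<in>UNIV. vv k) = w + (\<Sum>k\<in>UNIV. if k = k0 then e else 0)"
              by (simp add: sum.distrib w_def)
            then show ?thesis by (simp add: W_def)
          qed
          have sp: "(\<Sum>k\<in>UNIV. \<pi> k) = 1"
            unfolding \<pi>_def sum_divide_distrib[symmetric] sumvv using W0 by simp
          have T1: "T * (1 - \<delta>) = t" using T0 unfolding \<delta>_def T_def by (simp add: field_simps)
          have T2: "T * \<delta> = W" using T0 unfolding \<delta>_def by simp
          have eq: "xe e = (\<lambda>i. T * phi (s, \<delta>, \<pi>) i)"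
          proof
            fix i
            have "T * phi (s, \<delta>, \<pi>) i = (T * (1 - \<delta>)) * phit s i + (T * \<delta>) * diag_array \<pi> i"
              unfolding phi_def by (simp add: algebra_simps)
            also have "\<dots> = t * phit s i + W * diag_array \<pi> i" unfolding T1 T2 ..
            also have "\<dots> = xe e i"
            proof (cases "diag_pos i")
              case True
              then obtain a where a: "i = (\<lambda>_. a)" unfolding diag_pos_def by blast
              have "diag_array \<pi> i = \<pi> a" unfolding a diag_array_def diag_pos_def const_fun_eq by auto
              then show ?thesis unfolding \<pi>_def vv_def a using W0 by simp
            next
              case False
              then have "i \<in> P_nondiag" by (simp add: P_nondiag_def)
              moreover have "i \<noteq> d0" using d0_diag calculation by blast
              ultimately show ?thesis by (simp add: nd_diag xe_def xq)
            qed
            finally show "xe e i = T * phi (s, \<delta>, \<pi>) i" ..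
          qed
          have "xe e \<in> cone (phi ` ?S)" unfolding cone_def eq
            by (intro CollectI exI[of _ T] exI[of _ "phi (s, \<delta>, \<pi>)"] conjI refl imageI) (simp add: sp)
          then show ?thesis using f unfolding vanishing_ideal_def by blast
        qed
        have c: "continuous_on UNIV (\<lambda>e. mpoly_eval (xe e) f)"
          unfolding xe_def by (rule eval_line_cont)
        have "mpoly_eval (xe 0) f = 0"
          by (rule cont_zero[OF c, of "{-w, -t-w}"]) (auto intro: good)
        then show "mpoly_eval x f = 0" by (simp add: xe_def)
      qed
      have "f \<in> ideal_gen (vanishing_ideal ?Q \<inter> {f. mpoly_vars f \<subseteq> P_nondiag})"
        by (rule decomp_ideal[OF _ fQ]) auto
      also have "\<dots> \<subseteq> ideal_gen ?G"
      proof (rule ig_mono, rule subsetI, rule ig_base)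
        fix g assume "g \<in> vanishing_ideal ?Q \<inter> {f. mpoly_vars f \<subseteq> P_nondiag}"
        moreover have "cone (range phit) \<subseteq> ?Q" unfolding cone_def by auto
        ultimately show "g \<in> ?G" using vanishing_anti by blast
      qed
      finally show "f \<in> ideal_gen ?G" .
    qed
  qed
  then show ?thesis unfolding hom_ideal_eq .
qed

end
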